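(* Let $R$ be a ring with identity, ${}_RM$ a finitely generated semisimple left $R$-module, and $\varphi:M\to M$ an indecomposable nilpotent element of the ring $\mathrm{Hom}_R(M,M)$. Let $d=\dim_R(M)$ and let $n$ be the index of nilpotency of $\varphi$ ($\varphi^n=0\ne\varphi^{n-1}$). For $\psi\in\mathrm{Hom}_R(M,M)$ the following are equivalent: (1) $\psi\circ\varphi=\varphi\circ\psi$; (2) there exist an $R$-generating set $\{y_j\in M\mid1\le j\le d\}$ of ${}_RM$ and elements $a_1,\dots,a_n\in R$ such that for all $1\le j\le d$ \[a_1y_j+a_2\varphi(y_j)+\cdots+a_n\varphi^{n-1}(y_j)=\psi(y_j)\] and \[a_1\varphi(y_j)+a_2\varphi(\varphi(y_j))+\cdots+a_n\varphi^{n-1}(\varphi(y_j))=\psi(\varphi(y_j)).\]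
   Context: A nilpotent element $s$ of a ring $S$ is decomposable if $es=se$ for some idempotent $e\in S$ with $0\ne e\ne1$, and indecomposable otherwise. $\dim_R$ denotes composition length. *)

theory Defs
  imports Main
begin

text \<open>A left module over the ring 'r (with identity) whose underlying abelian
group is the whole type 'm, given by a scalar multiplication.\<close>
definition lmodule :: "('r::ring_1 \<Rightarrow> 'm::ab_group_add \<Rightarrow> 'm) \<Rightarrow> bool" where
  "lmodule s \<longleftrightarrow>
     (\<forall>a x y. s a (x + y) = s a x + s a y) \<and>
     (\<forall>a b x. s (a + b) x = s a x + s b x) \<and>
     (\<forall>a b x. s (a * b) x = s a (s b x)) \<and>
     (\<forall>x. s 1 x = x)"

definition submodule :: "('r::ring_1 \<Rightarrow> 'm::ab_group_add \<Rightarrow> 'm) \<Rightarrow> 'm set \<Rightarrow> bool" where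
  "submodule s N \<longleftrightarrow> 0 \<in> N \<and> (\<forall>x\<in>N. \<forall>y\<in>N. x + y \<in> N) \<and> (\<forall>a. \<forall>x\<in>N. s a x \<in> N)"

definition rspan :: "('r::ring_1 \<Rightarrow> 'm::ab_group_add \<Rightarrow> 'm) \<Rightarrow> 'm set \<Rightarrow> 'm set" where
  "rspan s A = \<Inter> {N. submodule s N \<and> A \<subseteq> N}"

definition fin_gen :: "('r::ring_1 \<Rightarrow> 'm::ab_group_add \<Rightarrow> 'm) \<Rightarrow> bool" where
  "fin_gen s \<longleftrightarrow> (\<exists>A. finite A \<and> rspan s A = UNIV)"

definition simple_submodule :: "('r::ring_1 \<Rightarrow> 'm::ab_group_add \<Rightarrow> 'm) \<Rightarrow> 'm set \<Rightarrow> bool" where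
  "simple_submodule s N \<longleftrightarrow> submodule s N \<and> N \<noteq> {0} \<and>
     (\<forall>L. submodule s L \<and> L \<subseteq> N \<longrightarrow> L = {0} \<or> L = N)"

definition semisimple :: "('r::ring_1 \<Rightarrow> 'm::ab_group_add \<Rightarrow> 'm) \<Rightarrow> bool" where
  "semisimple s \<longleftrightarrow> rspan s (\<Union> {N. simple_submodule s N}) = UNIV"

definition rhom :: "('r::ring_1 \<Rightarrow> 'm::ab_group_add \<Rightarrow> 'm) \<Rightarrow> ('m \<Rightarrow> 'm) \<Rightarrow> bool" where
  "rhom s f \<longleftrightarrow> (\<forall>x y. f (x + y) = f x + f y) \<and> (\<forall>a x. f (s a x) = s a (f x))"

definition comp_series :: "('r::ring_1 \<Rightarrow> 'm::ab_group_add \<Rightarrow> 'm) \<Rightarrow> (nat \<Rightarrow> 'm set) \<Rightarrow> nat \<Rightarrow> bool" where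
  "comp_series s N d \<longleftrightarrow> N 0 = {0} \<and> N d = UNIV \<and> (\<forall>i\<le>d. submodule s (N i)) \<and>
     (\<forall>i<d. N i \<subset> N (Suc i) \<and>
        \<not> (\<exists>L. submodule s L \<and> N i \<subset> L \<and> L \<subset> N (Suc i)))"

text \<open>Composition length dim_R(M).\<close>
definition comp_length :: "('r::ring_1 \<Rightarrow> 'm::ab_group_add \<Rightarrow> 'm) \<Rightarrow> nat" where
  "comp_length s = (LEAST d. \<exists>N. comp_series s N d)"

definition nilpotent_endo :: "('m::ab_group_add \<Rightarrow> 'm) \<Rightarrow> bool" where
  "nilpotent_endo f \<longleftrightarrow> (\<exists>k. (f ^^ k) = (\<lambda>_. 0))"

definition indecomposable_nilpotent ::
  "('r::ring_1 \<Rightarrow> 'm::ab_group_add \<Rightarrow> 'm) \<Rightarrow> ('m \<Rightarrow> 'm) \<Rightarrow> bool" where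
  "indecomposable_nilpotent s f \<longleftrightarrow> rhom s f \<and> nilpotent_endo f \<and>
     \<not> (\<exists>e. rhom s e \<and> e \<circ> e = e \<and> e \<noteq> (\<lambda>_. 0) \<and> e \<noteq> id \<and> e \<circ> f = f \<circ> e)"

end

theory Submission
  imports Defs
begin

locale lmod =
  fixes sm :: "'r::ring_1 \<Rightarrow> 'm::ab_group_add \<Rightarrow> 'm"
  assumes lm: "lmodule sm"
begin

lemma sm_add: "sm a (x + y) = sm a x + sm a y" using lm unfolding lmodule_def by blast
lemma sm_add_left: "sm (a + b) x = sm a x + sm b x" using lm unfolding lmodule_def by blast
lemma sm_mult: "sm (a * b) x = sm a (sm b x)" using lm unfolding lmodule_def by blast
lemma sm_one[simp]: "sm 1 x = x" using lm unfolding lmodule_def by blast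

lemma sm_zero[simp]: "sm a 0 = 0"
  using sm_add[of a 0 0] by simp
lemma sm_zero_left[simp]: "sm 0 x = 0"
  using sm_add_left[of 0 0 x] by simp
lemma sm_minus: "sm a (- x) = - sm a x"
  using sm_add[of a x "-x"] by (simp add: eq_neg_iff_add_eq_0 add.commute)
lemma sm_diff: "sm a (x - y) = sm a x - sm a y"
  using sm_add[of a x "-y"] sm_minus by simp
lemma sm_neg1: "sm (-1) x = - x"
  using sm_add_left[of 1 "-1" x] by (simp add: eq_neg_iff_add_eq_0 add.commute)
lemma sm_sum: "sm a (sum f A) = (\<Sum>k\<in>A. sm a (f k))"
  by (induction A rule: infinite_finite_induct) (auto simp: sm_add)

lemma sub_zero: "submodule sm N \<Longrightarrow> 0 \<in> N" unfolding submodule_def by blast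
lemma sub_add: "submodule sm N \<Longrightarrow> x \<in> N \<Longrightarrow> y \<in> N \<Longrightarrow> x + y \<in> N" unfolding submodule_def by blast
lemma sub_sm: "submodule sm N \<Longrightarrow> x \<in> N \<Longrightarrow> sm a x \<in> N" unfolding submodule_def by blast
lemma sub_neg: "submodule sm N \<Longrightarrow> x \<in> N \<Longrightarrow> - x \<in> N"
  using sub_sm[of N x "-1"] sm_neg1 by simp
lemma sub_diff: "submodule sm N \<Longrightarrow> x \<in> N \<Longrightarrow> y \<in> N \<Longrightarrow> x - y \<in> N"
  using sub_add[of N x "-y"] sub_neg[of N y] by simp
lemma sub_sum: "submodule sm N \<Longrightarrow> (\<And>k. k \<in> A \<Longrightarrow> f k \<in> N) \<Longrightarrow> sum f A \<in> N"
  by (induction A rule: infinite_finite_induct) (auto simp: sub_zero sub_add)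
lemma sub_UNIV: "submodule sm UNIV" unfolding submodule_def by blast

lemma rspan_sub: "submodule sm (rspan sm A)"
  unfolding rspan_def submodule_def by blast
lemma rspan_inc: "A \<subseteq> rspan sm A" unfolding rspan_def by blast
lemma rspan_min: "submodule sm N \<Longrightarrow> A \<subseteq> N \<Longrightarrow> rspan sm A \<subseteq> N"
  unfolding rspan_def by blast
lemma rspan_mono: "A \<subseteq> B \<Longrightarrow> rspan sm A \<subseteq> rspan sm B"
  unfolding rspan_def by blast

lemma hom_add: "rhom sm f \<Longrightarrow> f (x + y) = f x + f y" unfolding rhom_def by blast
lemma hom_sm: "rhom sm f \<Longrightarrow> f (sm a x) = sm a (f x)" unfolding rhom_def by blast
lemma hom_zero: "rhom sm f \<Longrightarrow> f 0 = 0"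
  using hom_add[of f 0 0] by simp
lemma hom_neg: "rhom sm f \<Longrightarrow> f (- x) = - f x"
  using hom_add[of f x "-x"] hom_zero[of f] by (simp add: eq_neg_iff_add_eq_0 add.commute)
lemma hom_diff: "rhom sm f \<Longrightarrow> f (x - y) = f x - f y"
  using hom_add[of f x "-y"] hom_neg[of f y] by simp
lemma hom_sum: "rhom sm f \<Longrightarrow> f (sum g A) = (\<Sum>k\<in>A. f (g k))"
  by (induction A rule: infinite_finite_induct) (auto simp: hom_add hom_zero)
lemma hom_pow: "rhom sm f \<Longrightarrow> rhom sm (f ^^ k)"
  by (induction k) (auto simp: rhom_def)
lemma hom_comp: "rhom sm f \<Longrightarrow> rhom sm g \<Longrightarrow> rhom sm (f \<circ> g)"
  by (auto simp: rhom_def)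

end

context lmod begin

definition msum :: "'m set \<Rightarrow> 'm set \<Rightarrow> 'm set" where
  "msum A B = {a + b | a b. a \<in> A \<and> b \<in> B}"

lemma msum_sub: assumes "submodule sm A" "submodule sm B" shows "submodule sm (msum A B)"
proof -
  have "0 \<in> msum A B" unfolding msum_def using sub_zero[OF assms(1)] sub_zero[OF assms(2)] by force
  moreover have "x + y \<in> msum A B" if xy: "x \<in> msum A B" "y \<in> msum A B" for x y
  proof -
    obtain a b a' b' where "a \<in> A" "b \<in> B" "x = a + b" "a' \<in> A" "b' \<in> B" "y = a' + b'"
      using xy unfolding msum_def by blast
    thus ?thesis unfolding msum_def using sub_add[OF assms(1)] sub_add[OF assms(2)]
      by (rule_tac CollectI, rule_tac x="a+a'" in exI, rule_tac x="b+b'" in exI) (simp add: algebra_simps)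
  qed
  moreover have "sm c x \<in> msum A B" if xy: "x \<in> msum A B" for x c
  proof -
    obtain a b where "a \<in> A" "b \<in> B" "x = a + b"
      using xy unfolding msum_def by blast
    thus ?thesis unfolding msum_def using sub_sm[OF assms(1)] sub_sm[OF assms(2)]
      by (rule_tac CollectI, rule_tac x="sm c a" in exI, rule_tac x="sm c b" in exI) (simp add: sm_add)
  qed
  ultimately show ?thesis unfolding submodule_def by blast
qed

lemma msum_right: "submodule sm A \<Longrightarrow> B \<subseteq> msum A B"
  unfolding msum_def using sub_zero by force
lemma msum_le: "submodule sm P \<Longrightarrow> A \<subseteq> P \<Longrightarrow> B \<subseteq> P \<Longrightarrow> msum A B \<subseteq> P"
  unfolding msum_def using sub_add by blast
lemma msum_mono: "A \<subseteq> A' \<Longrightarrow> msum A B \<subseteq> msum A' B"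
  unfolding msum_def by blast

lemma modular_eq:
  assumes "submodule sm A'" "A \<subseteq> A'" "A \<inter> Q = A' \<inter> Q" "msum A Q = msum A' Q" "submodule sm Q" "submodule sm A"
  shows "A = A'"
proof -
  have "A' \<subseteq> A"
  proof
    fix x assume x: "x \<in> A'"
    have "x \<in> msum A' Q" using msum_def x sub_zero[OF assms(5)] by force
    hence "x \<in> msum A Q" using assms(4) by simp
    then obtain a q where aq: "a \<in> A" "q \<in> Q" "x = a + q" unfolding msum_def by blast
    have "q = x - a" using aq by simp
    hence "q \<in> A'" using sub_diff[OF assms(1) x, of a] aq assms(2) by auto
    hence "q \<in> A" using aq assms(3) by blast
    thus "x \<in> A" using aq sub_add[OF assms(6), of a q] by simp
  qed
  thus ?thesis using assms(2) by blast
qed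

lemma chain_bound:
  "\<forall>P N K m. N 0 = {0} \<and> N d = P \<and> (\<forall>i\<le>d. submodule sm (N i)) \<and>
     (\<forall>i<d. N i \<subseteq> N (Suc i) \<and> \<not> (\<exists>L. submodule sm L \<and> N i \<subset> L \<and> L \<subset> N (Suc i))) \<and>
     (\<forall>i\<le>m. submodule sm (K i) \<and> K i \<subseteq> P) \<and> (\<forall>i j. i \<le> j \<longrightarrow> j \<le> m \<longrightarrow> K i \<subseteq> K j)
     \<longrightarrow> card {i. i < m \<and> K i \<subset> K (Suc i)} \<le> d"
proof (induction d)
  case 0
  show ?case
  proof (intro allI impI)
    fix P :: "'m set" and N K :: "nat \<Rightarrow> 'm set" and m :: nat
    assume H: "N 0 = {0} \<and> N 0 = P \<and> (\<forall>i\<le>0. submodule sm (N i)) \<and>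
     (\<forall>i<0. N i \<subseteq> N (Suc i) \<and> \<not> (\<exists>L. submodule sm L \<and> N i \<subset> L \<and> L \<subset> N (Suc i))) \<and>
     (\<forall>i\<le>m. submodule sm (K i) \<and> K i \<subseteq> P) \<and> (\<forall>i j. i \<le> j \<longrightarrow> j \<le> m \<longrightarrow> K i \<subseteq> K j)"
    have "K i = {0}" if "i \<le> m" for i
    proof -
      have "K i \<subseteq> {0}" "submodule sm (K i)" using H that by auto
      thus ?thesis using sub_zero[of "K i"] by blast
    qed
    hence "{i. i < m \<and> K i \<subset> K (Suc i)} = {}" by fastforce
    thus "card {i. i < m \<and> K i \<subset> K (Suc i)} \<le> 0" by simp
  qed
next
  case (Suc d)
  show ?case
  proof (intro allI impI)
    fix P :: "'m set" and N K :: "nat \<Rightarrow> 'm set" and m :: nat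
    assume H: "N 0 = {0} \<and> N (Suc d) = P \<and> (\<forall>i\<le>Suc d. submodule sm (N i)) \<and>
     (\<forall>i<Suc d. N i \<subseteq> N (Suc i) \<and> \<not> (\<exists>L. submodule sm L \<and> N i \<subset> L \<and> L \<subset> N (Suc i))) \<and>
     (\<forall>i\<le>m. submodule sm (K i) \<and> K i \<subseteq> P) \<and> (\<forall>i j. i \<le> j \<longrightarrow> j \<le> m \<longrightarrow> K i \<subseteq> K j)"
    define Q where "Q = N d"
    have Qs: "submodule sm Q" using H Q_def by simp
    have Ps: "submodule sm P" using H by auto
    have QP: "Q \<subseteq> P" using H Q_def by auto
    have Qmax: "\<not> (\<exists>L. submodule sm L \<and> Q \<subset> L \<and> L \<subset> P)"
    proof -
      have "d < Suc d" by simp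
      thus ?thesis using H unfolding Q_def by blast
    qed
    define K' where "K' i = K i \<inter> Q" for i
    have K's: "submodule sm (K' i)" if "i \<le> m" for i
      using H that Qs unfolding K'_def submodule_def by blast
    have K'mono: "\<forall>i j. i \<le> j \<longrightarrow> j \<le> m \<longrightarrow> K' i \<subseteq> K' j"
      using H unfolding K'_def by blast
    have K'P: "\<forall>i\<le>m. submodule sm (K' i) \<and> K' i \<subseteq> Q" using K's unfolding K'_def by blast
    have Nrest: "\<forall>i<d. N i \<subseteq> N (Suc i) \<and> \<not> (\<exists>L. submodule sm L \<and> N i \<subset> L \<and> L \<subset> N (Suc i))"
      using H by auto
    have IH: "card {i. i < m \<and> K' i \<subset> K' (Suc i)} \<le> d"
      using Suc.IH[rule_format, where P=Q and N=N and K=K' and m=m] H K'mono K'P Nrest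
      unfolding Q_def by auto
    define S2 where "S2 = {i. i < m \<and> msum (K i) Q \<subset> msum (K (Suc i)) Q}"
    have S2: "card S2 \<le> Suc 0"
    proof (subst card_le_Suc0_iff_eq)
      show "finite S2" unfolding S2_def by simp
      show "\<forall>a1\<in>S2. \<forall>a2\<in>S2. a1 = a2"
      proof (rule ccontr)
        assume "\<not> ?thesis"
        then obtain i j where ij: "i \<in> S2" "j \<in> S2" "i < j" 
          by (metis linorder_neqE_nat)
        have im: "i < m" "j < m" using ij unfolding S2_def by auto
        have sK: "submodule sm (K k)" "K k \<subseteq> P" if "k \<le> m" for k using H that by auto
        have "msum (K (Suc i)) Q = P"
        proof (rule ccontr)
          assume ne: "msum (K (Suc i)) Q \<noteq> P"
          have "Q \<subseteq> msum (K i) Q" using msum_right sK im by simp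
          hence "Q \<subset> msum (K (Suc i)) Q" using ij(1) unfolding S2_def by auto
          moreover have "msum (K (Suc i)) Q \<subseteq> P" using msum_le[OF Ps] sK[of "Suc i"] im QP by simp
          moreover have "submodule sm (msum (K (Suc i)) Q)" using msum_sub sK[of "Suc i"] im Qs by simp
          ultimately show False using Qmax ne by blast
        qed
        moreover have "msum (K (Suc i)) Q \<subseteq> msum (K j) Q"
          using msum_mono H ij im by simp
        moreover have "msum (K (Suc j)) Q \<subseteq> P" using msum_le[OF Ps] sK[of "Suc j"] im QP by simp
        ultimately show False using ij(2) unfolding S2_def by auto
      qed
    qed
    have sub: "{i. i < m \<and> K i \<subset> K (Suc i)} \<subseteq> {i. i < m \<and> K' i \<subset> K' (Suc i)} \<union> S2"
    proof
      fix i assume "i \<in> {i. i < m \<and> K i \<subset> K (Suc i)}"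
      hence i: "i < m" "K i \<subset> K (Suc i)" by auto
      have "K' i \<subseteq> K' (Suc i)" using i unfolding K'_def by auto
      moreover have "msum (K i) Q \<subseteq> msum (K (Suc i)) Q" using i msum_mono by auto
      moreover have "\<not> (K' i = K' (Suc i) \<and> msum (K i) Q = msum (K (Suc i)) Q)"
        using modular_eq[of "K (Suc i)" "K i" Q] H i Qs unfolding K'_def by auto
      ultimately show "i \<in> {i. i < m \<and> K' i \<subset> K' (Suc i)} \<union> S2"
        unfolding S2_def using i by auto
    qed
    have "card {i. i < m \<and> K i \<subset> K (Suc i)} \<le> card ({i. i < m \<and> K' i \<subset> K' (Suc i)} \<union> S2)"
      by (rule card_mono[OF _ sub]) (simp add: S2_def)
    also have "\<dots> \<le> card {i. i < m \<and> K' i \<subset> K' (Suc i)} + card S2" by (rule card_Un_le)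
    finally show "card {i. i < m \<and> K i \<subset> K (Suc i)} \<le> Suc d" using IH S2 by simp
  qed
qed

end

locale nilp = lmod +
  fixes \<phi> and n :: nat
  assumes h\<phi>: "rhom sm \<phi>" and nil: "(\<phi> ^^ n) = (\<lambda>_. 0)" and nz: "(\<phi> ^^ (n - 1)) \<noteq> (\<lambda>_. 0)"
    and ss: "semisimple sm" and ind: "indecomposable_nilpotent sm \<phi>"
begin

lemma hP: "rhom sm (\<phi> ^^ k)" using hom_pow[OF h\<phi>] .

lemma n_pos: "n \<ge> 1"
proof (rule ccontr)
  assume "\<not> n \<ge> 1" hence "n = 0" by simp
  thus False using nil nz by simp
qed

lemma pow_add: "(\<phi> ^^ a) ((\<phi> ^^ b) x) = (\<phi> ^^ (a + b)) x" by (simp add: funpow_add)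

lemma pow_big: "n \<le> p \<Longrightarrow> (\<phi> ^^ p) x = 0"
proof -
  assume "n \<le> p"
  hence "(\<phi> ^^ p) x = (\<phi> ^^ (p - n)) ((\<phi> ^^ n) x)" using pow_add[of "p-n" n x] by simp
  also have "\<dots> = 0" using nil hom_zero[OF hP] by simp
  finally show ?thesis .
qed

lemma pow_sm: "(\<phi> ^^ k) (sm a x) = sm a ((\<phi> ^^ k) x)" using hom_sm[OF hP] .

definition ker where "ker k = {x. (\<phi> ^^ k) x = 0}"

lemma ker_sub: "submodule sm (ker k)"
  unfolding ker_def submodule_def using hom_zero[OF hP] hom_add[OF hP] hom_sm[OF hP] by simp

lemma exists_w: "\<exists>w. (\<phi> ^^ (n - 1)) w \<noteq> 0 \<and>
   (\<forall>a. (\<phi> ^^ (n - 1)) (sm a w) = 0 \<longrightarrow> sm a w = 0) \<and>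
   (\<forall>a. sm a w \<noteq> 0 \<longrightarrow> (\<exists>b. sm b (sm a w) = w))"
proof -
  have "\<exists>S. simple_submodule sm S \<and> \<not> S \<subseteq> ker (n - 1)"
  proof (rule ccontr)
    assume "\<not> ?thesis"
    hence "\<Union> {N. simple_submodule sm N} \<subseteq> ker (n - 1)" by blast
    hence "rspan sm (\<Union> {N. simple_submodule sm N}) \<subseteq> ker (n - 1)" using rspan_min ker_sub by blast
    hence "ker (n - 1) = UNIV" using ss unfolding semisimple_def by blast
    thus False using nz unfolding ker_def by auto
  qed
  then obtain S where S: "simple_submodule sm S" "\<not> S \<subseteq> ker (n - 1)" by blast
  then obtain w where w: "w \<in> S" "w \<notin> ker (n - 1)" by blast
  have Ss: "submodule sm S" using S unfolding simple_submodule_def by blast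
  have Ssimp: "\<And>L. submodule sm L \<Longrightarrow> L \<subseteq> S \<Longrightarrow> L = {0} \<or> L = S"
    using S unfolding simple_submodule_def by blast
  have SK: "S \<inter> ker (n - 1) = {0}"
  proof -
    have "submodule sm (S \<inter> ker (n - 1))" using Ss ker_sub[of "n-1"] unfolding submodule_def by blast
    hence "S \<inter> ker (n - 1) = {0} \<or> S \<inter> ker (n - 1) = S" using Ssimp by blast
    thus ?thesis using S(2) by blast
  qed
  have inS: "sm a w \<in> S" for a using sub_sm[OF Ss w(1)] .
  have A: "\<forall>a. (\<phi> ^^ (n - 1)) (sm a w) = 0 \<longrightarrow> sm a w = 0"
    using SK inS unfolding ker_def by blast
  have B: "\<exists>b. sm b (sm a w) = w" if nz0: "sm a w \<noteq> 0" for a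
  proof -
    define L where "L = range (\<lambda>b. sm b (sm a w))"
    have Ls: "submodule sm L" unfolding L_def submodule_def
    proof (intro conjI ballI allI)
      show "0 \<in> range (\<lambda>b. sm b (sm a w))" by (rule range_eqI[of _ _ 0]) simp
      fix x y assume "x \<in> range (\<lambda>b. sm b (sm a w))" "y \<in> range (\<lambda>b. sm b (sm a w))"
      then obtain b c where "x = sm b (sm a w)" "y = sm c (sm a w)" by blast
      thus "x + y \<in> range (\<lambda>b. sm b (sm a w))" by (intro range_eqI[of _ _ "b + c"]) (simp add: sm_add_left)
    next
      fix c x assume "x \<in> range (\<lambda>b. sm b (sm a w))"
      then obtain b where "x = sm b (sm a w)" by blast
      thus "sm c x \<in> range (\<lambda>b. sm b (sm a w))" by (intro range_eqI[of _ _ "c * b"]) (simp add: sm_mult)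
    qed
    have "L \<subseteq> S" unfolding L_def using sub_sm[OF Ss inS] by blast
    moreover have "sm a w \<in> L" unfolding L_def by (rule range_eqI[of _ _ 1]) simp
    ultimately have "L = S" using Ssimp[OF Ls] nz0 by blast
    thus ?thesis using w(1) unfolding L_def by (metis rangeE)
  qed
  show ?thesis using w(2) A B unfolding ker_def by blast
qed

end

locale wsetup = nilp +
  fixes w
  assumes wnz: "(\<phi> ^^ (n - 1)) w \<noteq> 0"
    and F1: "(\<phi> ^^ (n - 1)) (sm a w) = 0 \<Longrightarrow> sm a w = 0"
    and F2: "sm a w \<noteq> 0 \<Longrightarrow> \<exists>b. sm b (sm a w) = w"
begin

lemma eval_sum:
  assumes "i < n" "\<And>k. k < i \<Longrightarrow> sm (c k) w = 0"
  shows "(\<phi> ^^ (n - 1 - i)) (\<Sum>k<n. (\<phi> ^^ k) (sm (c k) w)) = (\<phi> ^^ (n - 1)) (sm (c i) w)"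
proof -
  have "(\<phi> ^^ (n - 1 - i)) (\<Sum>k<n. (\<phi> ^^ k) (sm (c k) w)) = (\<Sum>k<n. (\<phi> ^^ (n - 1 - i + k)) (sm (c k) w))"
    by (simp add: hom_sum[OF hP] pow_add)
  also have "\<dots> = (\<Sum>k<n. if k = i then (\<phi> ^^ (n - 1)) (sm (c i) w) else 0)"
  proof (rule sum.cong[OF refl])
    fix k assume "k \<in> {..<n}"
    show "(\<phi> ^^ (n - 1 - i + k)) (sm (c k) w) = (if k = i then (\<phi> ^^ (n - 1)) (sm (c i) w) else 0)"
    proof (cases "k < i")
      case True thus ?thesis using assms(2)[OF True] hom_zero[OF hP] by simp
    next
      case False
      show ?thesis
      proof (cases "k = i")
        case True thus ?thesis using assms(1) by simp
      next
        case F2: False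
        hence "n \<le> n - 1 - i + k" using False assms(1) by simp
        thus ?thesis using pow_big F2 by simp
      qed
    qed
  qed
  also have "\<dots> = (\<phi> ^^ (n - 1)) (sm (c i) w)" using assms(1) by simp
  finally show ?thesis .
qed

lemma lowzero:
  assumes "\<And>i. i < t \<Longrightarrow> (\<phi> ^^ (n - 1 - i)) (\<Sum>k<n. (\<phi> ^^ k) (sm (c k) w)) = 0" "t \<le> n"
  shows "i < t \<Longrightarrow> sm (c i) w = 0"
proof (induction i rule: less_induct)
  case (less i)
  have "(\<phi> ^^ (n - 1)) (sm (c i) w) = 0"
    using eval_sum[of i c] less assms by simp
  thus ?case using F1 by blast
qed

lemma direct:
  assumes "(\<Sum>k<n. (\<phi> ^^ k) (sm (c k) w)) = 0" "i < n"
  shows "sm (c i) w = 0"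
  using lowzero[of n c i] assms hom_zero[OF hP] by simp

end

context lmod begin
lemma sm_minus_left: "sm (- a) x = - sm a x"
  using sm_add_left[of a "-a" x] by (simp add: eq_neg_iff_add_eq_0 add.commute)
lemma sm_diff_left: "sm (a - b) x = sm a x - sm b x"
  using sm_add_left[of a "-b" x] sm_minus_left[of b x] by simp
end

context wsetup begin

definition T where "T = range (\<lambda>a. (\<phi> ^^ (n - 1)) (sm a w))"
definition U where "U = {x. \<exists>c. x = (\<Sum>k<n - 1. (\<phi> ^^ k) (sm (c k) w))}"

lemma T_sub: "submodule sm T"
  unfolding T_def submodule_def
proof (intro conjI ballI allI)
  show "0 \<in> range (\<lambda>a. (\<phi> ^^ (n - 1)) (sm a w))" by (rule range_eqI[of _ _ 0]) (simp add: hom_zero[OF hP])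
  fix x y assume "x \<in> range (\<lambda>a. (\<phi> ^^ (n - 1)) (sm a w))" "y \<in> range (\<lambda>a. (\<phi> ^^ (n - 1)) (sm a w))"
  then obtain b c where "x = (\<phi> ^^ (n - 1)) (sm b w)" "y = (\<phi> ^^ (n - 1)) (sm c w)" by blast
  thus "x + y \<in> range (\<lambda>a. (\<phi> ^^ (n - 1)) (sm a w))"
    by (intro range_eqI[of _ _ "b + c"]) (simp add: sm_add_left hom_add[OF hP])
next
  fix c x assume "x \<in> range (\<lambda>a. (\<phi> ^^ (n - 1)) (sm a w))"
  then obtain b where "x = (\<phi> ^^ (n - 1)) (sm b w)" by blast
  thus "sm c x \<in> range (\<lambda>a. (\<phi> ^^ (n - 1)) (sm a w))"
    by (intro range_eqI[of _ _ "c * b"]) (simp add: sm_mult hom_sm[OF hP])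
qed

lemma U_sub: "submodule sm U"
  unfolding U_def submodule_def
proof (intro conjI ballI allI)
  show "0 \<in> {x. \<exists>c. x = (\<Sum>k<n - 1. (\<phi> ^^ k) (sm (c k) w))}"
    by (auto intro!: exI[of _ "\<lambda>_. 0"] simp: hom_zero[OF hP])
  fix x y assume "x \<in> {x. \<exists>c. x = (\<Sum>k<n - 1. (\<phi> ^^ k) (sm (c k) w))}" "y \<in> {x. \<exists>c. x = (\<Sum>k<n - 1. (\<phi> ^^ k) (sm (c k) w))}"
  then obtain b c where "x = (\<Sum>k<n - 1. (\<phi> ^^ k) (sm (b k) w))" "y = (\<Sum>k<n - 1. (\<phi> ^^ k) (sm (c k) w))" by blast
  thus "x + y \<in> {x. \<exists>c. x = (\<Sum>k<n - 1. (\<phi> ^^ k) (sm (c k) w))}"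
    by (auto intro!: exI[of _ "\<lambda>k. b k + c k"] simp: sm_add_left hom_add[OF hP] sum.distrib)
next
  fix d x assume "x \<in> {x. \<exists>c. x = (\<Sum>k<n - 1. (\<phi> ^^ k) (sm (c k) w))}"
  then obtain b where "x = (\<Sum>k<n - 1. (\<phi> ^^ k) (sm (b k) w))" by blast
  thus "sm d x \<in> {x. \<exists>c. x = (\<Sum>k<n - 1. (\<phi> ^^ k) (sm (c k) w))}"
    by (auto intro!: exI[of _ "\<lambda>k. d * b k"] simp: sm_mult hom_sm[OF hP] sm_sum)
qed

lemma UT: assumes "x \<in> U" "x \<in> T" shows "x = 0"
proof -
  obtain c where c: "x = (\<Sum>k<n - 1. (\<phi> ^^ k) (sm (c k) w))" using assms(1) unfolding U_def by blast
  obtain a where a: "x = (\<phi> ^^ (n - 1)) (sm a w)" using assms(2) unfolding T_def by blast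
  define c' where "c' k = (if k < n - 1 then c k else - a)" for k
  have nS: "n = Suc (n - 1)" using n_pos by simp
  have "(\<Sum>k<n. (\<phi> ^^ k) (sm (c' k) w)) = (\<Sum>k<Suc (n - 1). (\<phi> ^^ k) (sm (c' k) w))"
    using nS by simp
  also have "\<dots> = (\<Sum>k<n - 1. (\<phi> ^^ k) (sm (c' k) w)) + (\<phi> ^^ (n - 1)) (sm (c' (n - 1)) w)"
    by (rule sum.lessThan_Suc)
  also have "(\<Sum>k<n - 1. (\<phi> ^^ k) (sm (c' k) w)) = x" unfolding c c'_def by simp
  also have "(\<phi> ^^ (n - 1)) (sm (c' (n - 1)) w) = - x"
    unfolding a c'_def by (simp add: sm_minus_left hom_neg[OF hP])
  finally have "(\<Sum>k<n. (\<phi> ^^ k) (sm (c' k) w)) = 0" by simp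
  hence "sm (c' (n - 1)) w = 0" using direct[of c' "n - 1"] n_pos by simp
  hence "sm a w = 0" unfolding c'_def by (simp add: sm_minus_left)
  thus ?thesis using a hom_zero[OF hP] by simp
qed

lemma exists_V: "\<exists>V. submodule sm V \<and> U \<subseteq> V \<and> V \<inter> T \<subseteq> {0} \<and> msum V T = UNIV"
proof -
  define A where "A = {V. submodule sm V \<and> U \<subseteq> V \<and> V \<inter> T \<subseteq> {0}}"
  have UA: "U \<in> A" unfolding A_def using U_sub UT by blast
  have "\<forall>C\<in>chains A. \<exists>X\<in>A. \<forall>Y\<in>C. Y \<subseteq> X"
  proof
    fix C assume C: "C \<in> chains A"
    show "\<exists>X\<in>A. \<forall>Y\<in>C. Y \<subseteq> X"
    proof (cases "C = {}")
      case True thus ?thesis using UA by blast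
    next
      case False
      have CA: "C \<subseteq> A" and ch: "\<forall>X\<in>C. \<forall>Y\<in>C. X \<subseteq> Y \<or> Y \<subseteq> X"
        using C unfolding chains_def chain_subset_def by auto
      have "\<Union>C \<in> A"
        unfolding A_def
      proof (intro CollectI conjI)
        show "submodule sm (\<Union>C)" unfolding submodule_def
        proof (intro conjI ballI allI)
          obtain X where "X \<in> C" using False by blast
          thus "0 \<in> \<Union>C" using CA sub_zero unfolding A_def by blast
        next
          fix x y assume "x \<in> \<Union>C" "y \<in> \<Union>C"
          then obtain X Y where XY: "X \<in> C" "Y \<in> C" "x \<in> X" "y \<in> Y" by blast
          show "x + y \<in> \<Union>C"
          proof (cases "X \<subseteq> Y")
            case True
            hence "x + y \<in> Y" using sub_add[of Y x y] XY CA unfolding A_def by blast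
            thus ?thesis using XY by blast
          next
            case False
            hence "Y \<subseteq> X" using ch XY by blast
            hence "x + y \<in> X" using sub_add[of X x y] XY CA unfolding A_def by blast
            thus ?thesis using XY by blast
          qed
        next
          fix a x assume "x \<in> \<Union>C"
          then obtain X where "X \<in> C" "x \<in> X" by blast
          thus "sm a x \<in> \<Union>C" using sub_sm[of X x a] CA unfolding A_def by blast
        qed
        show "U \<subseteq> \<Union>C" using False CA unfolding A_def by blast
        show "\<Union>C \<inter> T \<subseteq> {0}" using CA unfolding A_def by blast
      qed
      thus ?thesis by blast
    qed
  qed
  then obtain V where V: "V \<in> A" "\<forall>X\<in>A. V \<subseteq> X \<longrightarrow> X = V" using Zorn_Lemma2[of A] by blast
  have Vs: "submodule sm V" "U \<subseteq> V" "V \<inter> T \<subseteq> {0}" using V(1) unfolding A_def by auto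
  have VTs: "submodule sm (msum V T)" using msum_sub Vs T_sub by blast
  have "L \<subseteq> msum V T" if L: "simple_submodule sm L" for L
  proof (rule ccontr)
    assume nL: "\<not> L \<subseteq> msum V T"
    have Ls: "submodule sm L" using L unfolding simple_submodule_def by blast
    have "submodule sm (L \<inter> msum V T)" using Ls VTs unfolding submodule_def by blast
    hence "L \<inter> msum V T = {0} \<or> L \<inter> msum V T = L" using L unfolding simple_submodule_def by blast
    hence LI: "L \<inter> msum V T = {0}" using nL by blast
    define V' where "V' = msum V L"
    have "V' \<in> A" unfolding A_def
    proof (intro CollectI conjI)
      show "submodule sm V'" unfolding V'_def using msum_sub Vs Ls by blast
      have "V \<subseteq> V'" unfolding V'_def msum_def using sub_zero[OF Ls] by force
      thus "U \<subseteq> V'" using Vs by blast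
      show "V' \<inter> T \<subseteq> {0}"
      proof
        fix x assume "x \<in> V' \<inter> T"
        then obtain v l where vl: "v \<in> V" "l \<in> L" "x = v + l" "x \<in> T" unfolding V'_def msum_def by blast
        have "l = x - v" using vl by simp
        moreover have "x - v \<in> msum V T" unfolding msum_def
          using vl sub_neg[OF Vs(1), of v] by (rule_tac CollectI, rule_tac x="-v" in exI, rule_tac x=x in exI) simp
        ultimately have "l = 0" using LI vl by blast
        hence "x \<in> V" using vl by simp
        thus "x \<in> {0}" using Vs vl by blast
      qed
    qed
    moreover have "V \<subseteq> V'" unfolding V'_def msum_def using sub_zero[OF Ls] by force
    ultimately have "V' = V" using V(2) by blast
    moreover have "L \<subseteq> V'" using msum_right[OF Vs(1)] unfolding V'_def .
    moreover have "V \<subseteq> msum V T" unfolding msum_def using sub_zero[OF T_sub] by force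
    ultimately show False using nL by blast
  qed
  hence "\<Union> {N. simple_submodule sm N} \<subseteq> msum V T" by blast
  hence "rspan sm (\<Union> {N. simple_submodule sm N}) \<subseteq> msum V T" using rspan_min VTs by blast
  hence "msum V T = UNIV" using ss unfolding semisimple_def by blast
  thus ?thesis using Vs by blast
qed

definition V where "V = (SOME V. submodule sm V \<and> U \<subseteq> V \<and> V \<inter> T \<subseteq> {0} \<and> msum V T = UNIV)"

lemma V_props: "submodule sm V" "U \<subseteq> V" "V \<inter> T \<subseteq> {0}" "msum V T = UNIV"
  using someI_ex[OF exists_V] unfolding V_def by blast+

definition gc where "gc x = (SOME a. x - (\<phi> ^^ (n - 1)) (sm a w) \<in> V)"
definition g where "g x = sm (gc x) w"

lemma g_ex: "\<exists>a. x - (\<phi> ^^ (n - 1)) (sm a w) \<in> V"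
proof -
  have "x \<in> msum V T" using V_props by simp
  then obtain v t where "v \<in> V" "t \<in> T" "x = v + t" unfolding msum_def by blast
  moreover then obtain a where "t = (\<phi> ^^ (n - 1)) (sm a w)" unfolding T_def by blast
  ultimately show ?thesis by (intro exI[of _ a]) simp
qed

lemma g_prop: assumes "x - (\<phi> ^^ (n - 1)) (sm a w) \<in> V" shows "g x = sm a w"
proof -
  have b: "x - (\<phi> ^^ (n - 1)) (sm (gc x) w) \<in> V" unfolding gc_def by (rule someI_ex[OF g_ex])
  have "(x - (\<phi> ^^ (n - 1)) (sm a w)) - (x - (\<phi> ^^ (n - 1)) (sm (gc x) w)) \<in> V"
    using sub_diff[OF V_props(1) assms b] .
  moreover have "(x - (\<phi> ^^ (n - 1)) (sm a w)) - (x - (\<phi> ^^ (n - 1)) (sm (gc x) w))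
     = (\<phi> ^^ (n - 1)) (sm (gc x - a) w)" by (simp add: sm_diff_left hom_diff[OF hP])
  moreover have "(\<phi> ^^ (n - 1)) (sm (gc x - a) w) \<in> T" unfolding T_def by blast
  ultimately have "(\<phi> ^^ (n - 1)) (sm (gc x - a) w) = 0" using V_props(3) by auto
  hence "sm (gc x - a) w = 0" using F1 by blast
  thus ?thesis unfolding g_def by (simp add: sm_diff_left)
qed

lemma g_add: "g (x + y) = g x + g y"
proof -
  obtain a b where ab: "x - (\<phi> ^^ (n - 1)) (sm a w) \<in> V" "y - (\<phi> ^^ (n - 1)) (sm b w) \<in> V"
    using g_ex by blast
  have eq: "(x + y) - (\<phi> ^^ (n - 1)) (sm (a + b) w) = (x - (\<phi> ^^ (n - 1)) (sm a w)) + (y - (\<phi> ^^ (n - 1)) (sm b w))"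
    by (simp add: sm_add_left hom_add[OF hP] algebra_simps)
  have "(x + y) - (\<phi> ^^ (n - 1)) (sm (a + b) w) \<in> V" unfolding eq by (rule sub_add[OF V_props(1) ab])
  hence "g (x + y) = sm (a + b) w" by (rule g_prop)
  moreover have "g x = sm a w" "g y = sm b w" using g_prop ab by auto
  ultimately show ?thesis by (simp add: sm_add_left)
qed

lemma g_sm: "g (sm c x) = sm c (g x)"
proof -
  obtain a where a: "x - (\<phi> ^^ (n - 1)) (sm a w) \<in> V" using g_ex by blast
  have eq: "sm c x - (\<phi> ^^ (n - 1)) (sm (c * a) w) = sm c (x - (\<phi> ^^ (n - 1)) (sm a w))"
    by (simp add: sm_mult sm_diff hom_sm[OF hP])
  have "sm c x - (\<phi> ^^ (n - 1)) (sm (c * a) w) \<in> V" unfolding eq by (rule sub_sm[OF V_props(1) a])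
  hence "g (sm c x) = sm (c * a) w" by (rule g_prop)
  moreover have "g x = sm a w" using g_prop a by auto
  ultimately show ?thesis by (simp add: sm_mult)
qed

lemma g_zero: "g 0 = 0" using g_sm[of 0 0] by simp

lemma g_top: "g ((\<phi> ^^ (n - 1)) (sm a w)) = sm a w"
  using g_prop[of "(\<phi> ^^ (n - 1)) (sm a w)" a] sub_zero[OF V_props(1)] by simp

lemma g_low: assumes "m < n - 1" shows "g ((\<phi> ^^ m) (sm a w)) = 0"
proof -
  define c where "c k = (if k = m then a else 0)" for k
  have "(\<Sum>k<n - 1. (\<phi> ^^ k) (sm (c k) w)) = (\<Sum>k<n - 1. if k = m then (\<phi> ^^ m) (sm a w) else 0)"
    by (rule sum.cong) (auto simp: c_def hom_zero[OF hP])
  also have "\<dots> = (\<phi> ^^ m) (sm a w)" using assms by simp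
  finally have "(\<phi> ^^ m) (sm a w) \<in> U" unfolding U_def by (metis (mono_tags, lifting) mem_Collect_eq)
  hence "(\<phi> ^^ m) (sm a w) - (\<phi> ^^ (n - 1)) (sm 0 w) \<in> V" using V_props(2) hom_zero[OF hP] by auto
  hence "g ((\<phi> ^^ m) (sm a w)) = sm 0 w" by (rule g_prop)
  thus ?thesis by simp
qed

definition \<pi> where "\<pi> x = (\<Sum>k<n. (\<phi> ^^ k) (g ((\<phi> ^^ (n - 1 - k)) x)))"

lemma \<pi>_hom: "rhom sm \<pi>"
  unfolding rhom_def \<pi>_def
  by (simp add: hom_add[OF hP] g_add sum.distrib hom_sm[OF hP] g_sm sm_sum)

lemma \<pi>_comm: "\<pi> (\<phi> x) = \<phi> (\<pi> x)"
proof -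
  define F where "F k = (\<phi> ^^ k) (g ((\<phi> ^^ (n - k)) x))" for k
  have "\<pi> (\<phi> x) = (\<Sum>k<n. F k)"
    unfolding \<pi>_def F_def
  proof (rule sum.cong[OF refl])
    fix k assume "k \<in> {..<n}"
    hence "n - 1 - k + 1 = n - k" by auto
    hence "(\<phi> ^^ (n - 1 - k)) (\<phi> x) = (\<phi> ^^ (n - k)) x" using pow_add[of "n-1-k" 1 x] by simp
    thus "(\<phi> ^^ k) (g ((\<phi> ^^ (n - 1 - k)) (\<phi> x))) = (\<phi> ^^ k) (g ((\<phi> ^^ (n - k)) x))" by simp
  qed
  also have "\<dots> = (\<Sum>k<Suc n. F k)" using pow_big[of n] unfolding F_def by (simp add: hom_zero[OF hP])
  also have "\<dots> = F 0 + (\<Sum>k<n. F (Suc k))" by (rule sum.lessThan_Suc_shift)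
  also have "F 0 = 0" unfolding F_def using pow_big[of n] g_zero by simp
  also have "(\<Sum>k<n. F (Suc k)) = \<phi> (\<pi> x)"
    unfolding \<pi>_def F_def hom_sum[OF h\<phi>]
  proof (rule sum.cong[OF refl])
    fix k assume "k \<in> {..<n}"
    hence "n - Suc k = n - 1 - k" by auto
    thus "(\<phi> ^^ Suc k) (g ((\<phi> ^^ (n - Suc k)) x)) = \<phi> ((\<phi> ^^ k) (g ((\<phi> ^^ (n - 1 - k)) x)))" by simp
  qed
  finally show ?thesis by simp
qed

lemma \<pi>_fix: assumes "j < n" shows "\<pi> ((\<phi> ^^ j) (sm a w)) = (\<phi> ^^ j) (sm a w)"
proof -
  have "\<pi> ((\<phi> ^^ j) (sm a w)) = (\<Sum>k<n. if k = j then (\<phi> ^^ j) (sm a w) else 0)"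
    unfolding \<pi>_def
  proof (rule sum.cong[OF refl])
    fix k assume k: "k \<in> {..<n}"
    have e: "(\<phi> ^^ (n - 1 - k)) ((\<phi> ^^ j) (sm a w)) = (\<phi> ^^ (n - 1 - k + j)) (sm a w)" by (rule pow_add)
    show "(\<phi> ^^ k) (g ((\<phi> ^^ (n - 1 - k)) ((\<phi> ^^ j) (sm a w)))) = (if k = j then (\<phi> ^^ j) (sm a w) else 0)"
    proof (cases "k < j")
      case True
      hence "n \<le> n - 1 - k + j" using k by auto
      thus ?thesis using True e pow_big g_zero hom_zero[OF hP] by simp
    next
      case False
      show ?thesis
      proof (cases "k = j")
        case True
        hence "n - 1 - k + j = n - 1" using k by auto
        thus ?thesis using True e g_top by simp
      next
        case F2: False
        hence "n - 1 - k + j < n - 1" using k False by auto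
        thus ?thesis using F2 e g_low hom_zero[OF hP] by simp
      qed
    qed
  qed
  also have "\<dots> = (\<phi> ^^ j) (sm a w)" using assms by simp
  finally show ?thesis .
qed

lemma \<pi>_range: "\<pi> x = (\<Sum>k<n. sm (gc ((\<phi> ^^ (n - 1 - k)) x)) ((\<phi> ^^ k) w))"
  unfolding \<pi>_def g_def by (simp add: pow_sm)

lemma \<pi>_cyc: "\<pi> (\<Sum>k<n. sm (c k) ((\<phi> ^^ k) w)) = (\<Sum>k<n. sm (c k) ((\<phi> ^^ k) w))"
proof -
  have "\<pi> (\<Sum>k<n. sm (c k) ((\<phi> ^^ k) w)) = (\<Sum>k<n. \<pi> ((\<phi> ^^ k) (sm (c k) w)))"
    by (simp add: hom_sum[OF \<pi>_hom] pow_sm)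
  also have "\<dots> = (\<Sum>k<n. (\<phi> ^^ k) (sm (c k) w))" by (rule sum.cong) (auto simp: \<pi>_fix)
  finally show ?thesis by (simp add: pow_sm)
qed

theorem cyclic: "\<exists>c. x = (\<Sum>k<n. sm (c k) ((\<phi> ^^ k) w))"
proof -
  have idem: "\<pi> \<circ> \<pi> = \<pi>" using \<pi>_cyc \<pi>_range by (auto simp: fun_eq_iff)
  have comm: "\<pi> \<circ> \<phi> = \<phi> \<circ> \<pi>" using \<pi>_comm by (auto simp: fun_eq_iff)
  have w0: "w \<noteq> 0" using wnz hom_zero[OF hP] by auto
  have "\<pi> w = w" using \<pi>_fix[of 0 1] n_pos by simp
  hence nz0: "\<pi> \<noteq> (\<lambda>_. 0)" using w0 by auto
  have "\<pi> = id" using ind \<pi>_hom idem comm nz0 unfolding indecomposable_nilpotent_def by blast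
  hence "x = \<pi> x" by simp
  thus ?thesis by (intro exI[of _ "\<lambda>k. gc ((\<phi> ^^ (n - 1 - k)) x)"]) (metis \<pi>_range)
qed

end

context wsetup begin

lemma decomp:
  assumes j: "j < n" and x0: "(\<phi> ^^ Suc j) x = 0" and x: "x = (\<Sum>k<n. sm (c k) ((\<phi> ^^ k) w))"
  shows "x - (\<phi> ^^ (n - 1 - j)) (sm (c (n - 1 - j)) w) \<in> ker j"
proof -
  define t where "t = n - 1 - j"
  have xs: "x = (\<Sum>k<n. (\<phi> ^^ k) (sm (c k) w))" using x by (simp add: pow_sm)
  have low: "sm (c i) w = 0" if "i < t" for i
  proof (rule lowzero[of t c i])
    fix i assume i: "i < t"
    have e: "n - 1 - i = (n - 1 - i - Suc j) + Suc j" using i t_def by arith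
    have "(\<phi> ^^ (n - 1 - i)) x = (\<phi> ^^ (n - 1 - i - Suc j)) ((\<phi> ^^ Suc j) x)"
      by (metis e pow_add)
    thus "(\<phi> ^^ (n - 1 - i)) (\<Sum>k<n. (\<phi> ^^ k) (sm (c k) w)) = 0"
      using x0 hom_zero[OF hP] xs by simp
  qed (use that t_def in auto)
  have "(\<phi> ^^ j) x = (\<Sum>k<n. (\<phi> ^^ (j + k)) (sm (c k) w))"
    unfolding xs by (simp add: hom_sum[OF hP] pow_add)
  also have "\<dots> = (\<Sum>k<n. if k = t then (\<phi> ^^ (j + t)) (sm (c t) w) else 0)"
  proof (rule sum.cong[OF refl])
    fix k assume k: "k \<in> {..<n}"
    show "(\<phi> ^^ (j + k)) (sm (c k) w) = (if k = t then (\<phi> ^^ (j + t)) (sm (c t) w) else 0)"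
    proof (cases "k < t")
      case True thus ?thesis using low hom_zero[OF hP] by simp
    next
      case False
      show ?thesis
      proof (cases "k = t")
        case True thus ?thesis by simp
      next
        case F2: False
        hence "n \<le> j + k" using False t_def j by auto
        thus ?thesis using pow_big F2 by simp
      qed
    qed
  qed
  also have "\<dots> = (\<phi> ^^ (j + t)) (sm (c t) w)" using j t_def by simp
  finally have "(\<phi> ^^ j) x = (\<phi> ^^ j) ((\<phi> ^^ t) (sm (c t) w))" by (simp add: pow_add)
  thus ?thesis unfolding ker_def t_def by (simp add: hom_diff[OF hP])
qed

lemma ker_mono: "i \<le> j \<Longrightarrow> ker i \<subseteq> ker j"
proof
  fix x assume "i \<le> j" "x \<in> ker i"
  hence "(\<phi> ^^ j) x = (\<phi> ^^ (j - i)) ((\<phi> ^^ i) x)" using pow_add[of "j-i" i x] by simp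
  thus "x \<in> ker j" using \<open>x \<in> ker i\<close> hom_zero[OF hP] unfolding ker_def by simp
qed

lemma ker_strict: assumes "j < n" shows "ker j \<subset> ker (Suc j)"
proof -
  obtain z where z: "(\<phi> ^^ (n - 1)) z \<noteq> 0" using nz by auto
  define x where "x = (\<phi> ^^ (n - 1 - j)) z"
  have "(\<phi> ^^ j) x = (\<phi> ^^ (n - 1)) z" unfolding x_def using pow_add[of j "n-1-j" z] assms by simp
  moreover have "(\<phi> ^^ Suc j) x = (\<phi> ^^ n) z" unfolding x_def using pow_add[of "Suc j" "n-1-j" z] assms by simp
  ultimately have "x \<in> ker (Suc j) - ker j" using z nil unfolding ker_def by simp
  thus ?thesis using ker_mono[of j "Suc j"] by auto
qed

lemma ker_max: assumes j: "j < n" and L: "submodule sm L" "ker j \<subset> L" "L \<subseteq> ker (Suc j)"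
  shows "L = ker (Suc j)"
proof -
  define t where "t = n - 1 - j"
  obtain x0 where x0: "x0 \<in> L" "x0 \<notin> ker j" using L by blast
  obtain c where c: "x0 = (\<Sum>k<n. sm (c k) ((\<phi> ^^ k) w))" using cyclic by blast
  have x0k: "(\<phi> ^^ Suc j) x0 = 0" using x0 L unfolding ker_def by blast
  define u where "u = (\<phi> ^^ t) (sm (c t) w)"
  have r: "x0 - u \<in> ker j" using decomp[OF j x0k c] unfolding u_def t_def .
  have "x0 - u \<in> L" using r L(2) by blast
  hence "x0 - (x0 - u) \<in> L" using sub_diff[OF L(1) x0(1)] by blast
  hence uL: "u \<in> L" by simp
  have "u \<notin> ker j"
  proof
    assume "u \<in> ker j"
    hence "(x0 - u) + u \<in> ker j" using sub_add[OF ker_sub r] by blast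
    thus False using x0 by simp
  qed
  hence "sm (c t) w \<noteq> 0" unfolding u_def ker_def using hom_zero[OF hP] by auto
  then obtain b where b: "sm b (sm (c t) w) = w" using F2 by blast
  have "y \<in> L" if y: "y \<in> ker (Suc j)" for y
  proof -
    obtain c' where c': "y = (\<Sum>k<n. sm (c' k) ((\<phi> ^^ k) w))" using cyclic by blast
    have yk: "(\<phi> ^^ Suc j) y = 0" using y unfolding ker_def by blast
    have r': "y - (\<phi> ^^ t) (sm (c' t) w) \<in> L" using decomp[OF j yk c'] L(2) unfolding t_def by blast
    have "(\<phi> ^^ t) (sm (c' t) w) = (\<phi> ^^ t) (sm (c' t) (sm b (sm (c t) w)))" using b by simp
    also have "\<dots> = sm (c' t * b) u" unfolding u_def by (simp add: sm_mult pow_sm)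
    finally have "(\<phi> ^^ t) (sm (c' t) w) \<in> L" using sub_sm[OF L(1) uL] by simp
    hence "(y - (\<phi> ^^ t) (sm (c' t) w)) + (\<phi> ^^ t) (sm (c' t) w) \<in> L" using sub_add[OF L(1) r'] by blast
    thus ?thesis by simp
  qed
  thus ?thesis using L by blast
qed

lemma comp_ker: "comp_series sm ker n"
  unfolding comp_series_def
proof (intro conjI allI impI)
  show "ker 0 = {0}" unfolding ker_def by simp
  show "ker n = UNIV" unfolding ker_def using nil by simp
  show "submodule sm (ker i)" for i by (rule ker_sub)
  fix i assume "i < n"
  thus "ker i \<subset> ker (Suc i)" by (rule ker_strict)
  show "\<not> (\<exists>L. submodule sm L \<and> ker i \<subset> L \<and> L \<subset> ker (Suc i))"
    using ker_max[OF \<open>i < n\<close>] by blast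
qed

lemma n_le_d: "n \<le> comp_length sm"
proof -
  have ex: "\<exists>N. comp_series sm N n" using comp_ker by blast
  obtain N where N: "comp_series sm N (comp_length sm)"
    unfolding comp_length_def using LeastI_ex[of "\<lambda>d. \<exists>N. comp_series sm N d"] ex by blast
  have Nc: "N 0 = {0}" "N (comp_length sm) = UNIV" "\<forall>i\<le>comp_length sm. submodule sm (N i)"
    "\<forall>i<comp_length sm. N i \<subseteq> N (Suc i) \<and> \<not> (\<exists>L. submodule sm L \<and> N i \<subset> L \<and> L \<subset> N (Suc i))"
    using N unfolding comp_series_def by auto
  have Kc: "\<forall>i\<le>n. submodule sm (ker i) \<and> ker i \<subseteq> UNIV" "\<forall>i j. i \<le> j \<longrightarrow> j \<le> n \<longrightarrow> ker i \<subseteq> ker j"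
    using ker_sub ker_mono by auto
  have "card {i. i < n \<and> ker i \<subset> ker (Suc i)} \<le> comp_length sm"
    using chain_bound[rule_format, where d="comp_length sm" and P=UNIV and N=N and K=ker and m=n, OF conjI[OF Nc(1) conjI[OF Nc(2) conjI[OF Nc(3) conjI[OF Nc(4) conjI[OF Kc]]]]]] .
  moreover have "{i. i < n \<and> ker i \<subset> ker (Suc i)} = {..<n}" using ker_strict by auto
  ultimately show ?thesis by simp
qed

end

theorem theorem4p8:
  fixes smult :: "'r::ring_1 \<Rightarrow> 'm::ab_group_add \<Rightarrow> 'm"
    and \<phi> \<psi> :: "'m \<Rightarrow> 'm" and d n :: nat
  assumes "lmodule smult"
    and "fin_gen smult"
    and "semisimple smult"
    and "rhom smult \<phi>"
    and "indecomposable_nilpotent smult \<phi>"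
    and "d = comp_length smult"
    and "(\<phi> ^^ n) = (\<lambda>_. 0)" and "(\<phi> ^^ (n - 1)) \<noteq> (\<lambda>_. 0)"
    and "rhom smult \<psi>"
  shows "\<psi> \<circ> \<phi> = \<phi> \<circ> \<psi> \<longleftrightarrow>
    (\<exists>(y :: nat \<Rightarrow> 'm) (a :: nat \<Rightarrow> 'r).
       rspan smult (y ` {1..d}) = UNIV \<and>
       (\<forall>j\<in>{1..d}.
          (\<Sum>i=1..n. smult (a i) ((\<phi> ^^ (i - 1)) (y j))) = \<psi> (y j) \<and>
          (\<Sum>i=1..n. smult (a i) ((\<phi> ^^ (i - 1)) (\<phi> (y j)))) = \<psi> (\<phi> (y j))))"
proof -
  interpret N: nilp smult \<phi> n
    using assms by unfold_locales auto
  show ?thesis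
  proof
    assume comm: "\<psi> \<circ> \<phi> = \<phi> \<circ> \<psi>"
    obtain w where w: "(\<phi> ^^ (n - 1)) w \<noteq> 0"
      "\<forall>a. (\<phi> ^^ (n - 1)) (smult a w) = 0 \<longrightarrow> smult a w = 0"
      "\<forall>a. smult a w \<noteq> 0 \<longrightarrow> (\<exists>b. smult b (smult a w) = w)"
      using N.exists_w by blast
    interpret W: wsetup smult \<phi> n w
      using w by unfold_locales auto
    obtain c where c: "\<psi> w = (\<Sum>k<n. smult (c k) ((\<phi> ^^ k) w))" using W.cyclic by blast
    define a where "a i = c (i - 1)" for i
    define y where "y j = (\<phi> ^^ (j - 1)) w" for j
    have pc: "\<psi> ((\<phi> ^^ m) x) = (\<phi> ^^ m) (\<psi> x)" for m x
    proof (induction m)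
      case (Suc m)
      have "\<psi> ((\<phi> ^^ Suc m) x) = \<psi> (\<phi> ((\<phi> ^^ m) x))" by simp
      also have "\<dots> = \<phi> (\<psi> ((\<phi> ^^ m) x))" using comm by (simp add: fun_eq_iff)
      finally show ?case using Suc by simp
    qed simp
    have key: "\<psi> ((\<phi> ^^ m) w) = (\<Sum>i=1..n. smult (a i) ((\<phi> ^^ (i - 1)) ((\<phi> ^^ m) w)))" for m
    proof -
      have "\<psi> ((\<phi> ^^ m) w) = (\<phi> ^^ m) (\<Sum>k<n. smult (c k) ((\<phi> ^^ k) w))" using pc c by simp
      also have "\<dots> = (\<Sum>k<n. smult (c k) ((\<phi> ^^ k) ((\<phi> ^^ m) w)))"
        by (simp add: N.hom_sum[OF N.hP] N.pow_sm N.pow_add add.commute)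
      also have "\<dots> = (\<Sum>i=1..n. smult (a i) ((\<phi> ^^ (i - 1)) ((\<phi> ^^ m) w)))"
        unfolding a_def by (simp add: sum.atLeast1_atMost_eq)
      finally show ?thesis .
    qed
    have span: "rspan smult (y ` {1..d}) = UNIV"
    proof -
      have "(\<phi> ^^ k) w \<in> y ` {1..d}" if "k < n" for k
      proof -
        have "Suc k \<in> {1..d}" using that W.n_le_d assms(6) by auto
        moreover have "y (Suc k) = (\<phi> ^^ k) w" unfolding y_def by simp
        ultimately show ?thesis by (metis image_eqI)
      qed
      hence sub: "(\<phi> ^^ k) w \<in> rspan smult (y ` {1..d})" if "k < n" for k
        using that N.rspan_inc by blast
      have "x \<in> rspan smult (y ` {1..d})" for x
      proof -
        obtain c' where "x = (\<Sum>k<n. smult (c' k) ((\<phi> ^^ k) w))" using W.cyclic by blast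
        moreover have "(\<Sum>k<n. smult (c' k) ((\<phi> ^^ k) w)) \<in> rspan smult (y ` {1..d})"
        proof (rule N.sub_sum[OF N.rspan_sub])
          fix k assume "k \<in> {..<n}"
          hence "(\<phi> ^^ k) w \<in> rspan smult (y ` {1..d})" using sub by blast
          thus "smult (c' k) ((\<phi> ^^ k) w) \<in> rspan smult (y ` {1..d})" by (rule N.sub_sm[OF N.rspan_sub])
        qed
        ultimately show ?thesis by simp
      qed
      thus ?thesis by blast
    qed
    have "\<forall>j\<in>{1..d}.
          (\<Sum>i=1..n. smult (a i) ((\<phi> ^^ (i - 1)) (y j))) = \<psi> (y j) \<and>
          (\<Sum>i=1..n. smult (a i) ((\<phi> ^^ (i - 1)) (\<phi> (y j)))) = \<psi> (\<phi> (y j))"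
    proof
      fix j assume j: "j \<in> {1..d}"
      have jj: "j = Suc (j - 1)" using j by auto
      have "\<phi> (y j) = (\<phi> ^^ Suc (j - 1)) w" unfolding y_def by simp
      hence yj: "\<phi> (y j) = (\<phi> ^^ j) w" using jj by simp
      thus "(\<Sum>i=1..n. smult (a i) ((\<phi> ^^ (i - 1)) (y j))) = \<psi> (y j) \<and>
          (\<Sum>i=1..n. smult (a i) ((\<phi> ^^ (i - 1)) (\<phi> (y j)))) = \<psi> (\<phi> (y j))"
        using key[of "j - 1"] key[of j] yj unfolding y_def by simp
    qed
    thus "\<exists>(y :: nat \<Rightarrow> 'm) (a :: nat \<Rightarrow> 'r).
       rspan smult (y ` {1..d}) = UNIV \<and>
       (\<forall>j\<in>{1..d}.
          (\<Sum>i=1..n. smult (a i) ((\<phi> ^^ (i - 1)) (y j))) = \<psi> (y j) \<and>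
          (\<Sum>i=1..n. smult (a i) ((\<phi> ^^ (i - 1)) (\<phi> (y j)))) = \<psi> (\<phi> (y j)))"
      using span by blast
  next
    assume "\<exists>(y :: nat \<Rightarrow> 'm) (a :: nat \<Rightarrow> 'r).
       rspan smult (y ` {1..d}) = UNIV \<and>
       (\<forall>j\<in>{1..d}.
          (\<Sum>i=1..n. smult (a i) ((\<phi> ^^ (i - 1)) (y j))) = \<psi> (y j) \<and>
          (\<Sum>i=1..n. smult (a i) ((\<phi> ^^ (i - 1)) (\<phi> (y j)))) = \<psi> (\<phi> (y j)))"
    then obtain y a where ya: "rspan smult (y ` {1..d}) = UNIV"
      "\<forall>j\<in>{1..d}.
          (\<Sum>i=1..n. smult (a i) ((\<phi> ^^ (i - 1)) (y j))) = \<psi> (y j) \<and>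
          (\<Sum>i=1..n. smult (a i) ((\<phi> ^^ (i - 1)) (\<phi> (y j)))) = \<psi> (\<phi> (y j))" by blast
    define Z where "Z = {x. \<psi> (\<phi> x) = \<phi> (\<psi> x)}"
    have Zs: "submodule smult Z" unfolding Z_def submodule_def
      using N.hom_zero[OF assms(4)] N.hom_zero[OF assms(9)] N.hom_add[OF assms(4)] N.hom_add[OF assms(9)]
        N.hom_sm[OF assms(4)] N.hom_sm[OF assms(9)] by simp
    have "y j \<in> Z" if j: "j \<in> {1..d}" for j
    proof -
      have "\<phi> (\<psi> (y j)) = \<phi> (\<Sum>i=1..n. smult (a i) ((\<phi> ^^ (i - 1)) (y j)))" using ya(2) j by simp
      also have "\<dots> = (\<Sum>i=1..n. smult (a i) ((\<phi> ^^ (i - 1)) (\<phi> (y j))))"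
        by (simp add: N.hom_sum[OF assms(4)] N.hom_sm[OF assms(4)] funpow_swap1)
      also have "\<dots> = \<psi> (\<phi> (y j))" using ya(2) j by simp
      finally show ?thesis unfolding Z_def by simp
    qed
    hence "rspan smult (y ` {1..d}) \<subseteq> Z" using N.rspan_min[OF Zs] by blast
    hence "Z = UNIV" using ya(1) by blast
    thus "\<psi> \<circ> \<phi> = \<phi> \<circ> \<psi>" unfolding Z_def by (auto simp: fun_eq_iff)
  qed
qed

end
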